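(* For $m\ge3$, no single contraction of the Lie algebra $\mathfrak{po}(m)$ yields a Lie algebra isomorphic to $\mathfrak{po}((1),\dots,(1))$ ($m$ copies of $(1)$).
   Context: $\mathfrak{po}(m)$ is the Lie algebra of the image $\mathrm{PO}(m)$ of $\mathrm{O}(m)$ in $\mathrm{PGL}_m\mathbb{R}$ (isomorphic to $\mathfrak{so}(m)$). $\mathfrak{po}((1),\dots,(1))$ is the Lie algebra of the image in $\mathrm{PGL}_m\mathbb{R}$ of the group of lower-triangular real matrices with diagonal entries $\pm1$; it is isomorphic to the Lie algebra of strictly lower-triangular real $m\times m$ matrices. Contraction: for a Lie algebra $\mathfrak{h}$, a Lie subalgebra $\mathfrak{t}$ with complementary subspace $\mathfrak{t}^c$ and $\phi_\varepsilon(X)=X_{\mathfrak{t}}+\varepsilon X_{\mathfrak{t}^c}$ ($\varepsilon>0$), the contraction along $\mathfrak{t}$ is the vector space of $\mathfrak{h}$ with bracket $[X,Y]'=\lim_{\varepsilon\to0}\phi_\varepsilon^{-1}([\phi_\varepsilon(X),\phi_\varepsilon(Y)])$. *)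

theory Defs
  imports "HOL-Analysis.Analysis"
begin

definition commutator :: "real^'n^'n \<Rightarrow> real^'n^'n \<Rightarrow> real^'n^'n" where
  "commutator A B = A ** B - B ** A"

text \<open>so(m), isomorphic to po(m): skew-symmetric matrices.\<close>
definition so_alg :: "(real^'n^'n) set" where
  "so_alg = {A. transpose A = - A}"

text \<open>Strictly lower-triangular matrices, isomorphic to po((1),...,(1)).\<close>
definition slt_alg :: "(real^('n::{finite,linorder})^('n::{finite,linorder})) set" where
  "slt_alg = {A. \<forall>i j. j \<ge> i \<longrightarrow> A $ i $ j = 0}"

definition lie_subalgebra :: "(real^'n^'n) set \<Rightarrow> (real^'n^'n) set \<Rightarrow> bool" where
  "lie_subalgebra t h \<longleftrightarrow> subspace t \<and> t \<subseteq> h \<and>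
     (\<forall>X\<in>t. \<forall>Y\<in>t. commutator X Y \<in> t)"

definition complement_in :: "(real^'n^'n) set \<Rightarrow> (real^'n^'n) set \<Rightarrow> (real^'n^'n) set \<Rightarrow> bool" where
  "complement_in tc t h \<longleftrightarrow> subspace tc \<and> tc \<subseteq> h \<and> t \<inter> tc = {0} \<and>
     (\<forall>X\<in>h. \<exists>a\<in>t. \<exists>b\<in>tc. X = a + b)"

definition proj_along :: "(real^'n^'n) set \<Rightarrow> (real^'n^'n) set \<Rightarrow> real^'n^'n \<Rightarrow> real^'n^'n" where
  "proj_along t tc X = (THE a. a \<in> t \<and> X - a \<in> tc)"

definition contr_phi :: "(real^'n^'n) set \<Rightarrow> (real^'n^'n) set \<Rightarrow> real \<Rightarrow> real^'n^'n \<Rightarrow> real^'n^'n" where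
  "contr_phi t tc \<epsilon> X = proj_along t tc X + \<epsilon> *\<^sub>R (X - proj_along t tc X)"

definition contr_phi_inv :: "(real^'n^'n) set \<Rightarrow> (real^'n^'n) set \<Rightarrow> real \<Rightarrow> real^'n^'n \<Rightarrow> real^'n^'n" where
  "contr_phi_inv t tc \<epsilon> Z = proj_along t tc Z + (1 / \<epsilon>) *\<^sub>R (Z - proj_along t tc Z)"

definition is_contraction_bracket ::
  "(real^'n^'n) set \<Rightarrow> (real^'n^'n) set \<Rightarrow> (real^'n^'n) set \<Rightarrow>
   (real^'n^'n \<Rightarrow> real^'n^'n \<Rightarrow> real^'n^'n) \<Rightarrow> bool" where
  "is_contraction_bracket h t tc br \<longleftrightarrow>
     (\<forall>X\<in>h. \<forall>Y\<in>h.
        ((\<lambda>\<epsilon>. contr_phi_inv t tc \<epsilon> (commutator (contr_phi t tc \<epsilon> X) (contr_phi t tc \<epsilon> Y)))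
          \<longlongrightarrow> br X Y) (at_right 0))"

definition lie_iso_onto ::
  "(real^'n^'n) set \<Rightarrow> (real^'n^'n \<Rightarrow> real^'n^'n \<Rightarrow> real^'n^'n) \<Rightarrow> (real^'n^'n) set \<Rightarrow>
   (real^'n^'n \<Rightarrow> real^'n^'n) \<Rightarrow> bool" where
  "lie_iso_onto h br g f \<longleftrightarrow>
     (\<forall>a b X Y. X \<in> h \<longrightarrow> Y \<in> h \<longrightarrow> f (a *\<^sub>R X + b *\<^sub>R Y) = a *\<^sub>R f X + b *\<^sub>R f Y) \<and>
     inj_on f h \<and> f ` h = g \<and>
     (\<forall>X\<in>h. \<forall>Y\<in>h. f (br X Y) = commutator (f X) (f Y))"

end

theory Submission
  imports Defs
begin

lemma skew_entry:
  fixes X :: "real^'n^'n"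
  assumes "transpose X = - X"
  shows "X$j$i = - X$i$j"
proof -
  have "transpose X $ i $ j = (- X) $ i $ j" using assms by simp
  then show ?thesis by (simp add: transpose_def)
qed

lemma swap3:
  "(\<Sum>i\<in>I. \<Sum>j\<in>J. \<Sum>k\<in>K. f i j k) = (\<Sum>k\<in>K. \<Sum>j\<in>J. \<Sum>i\<in>I. (f i j k::real))"
proof -
  have "(\<Sum>i\<in>I. \<Sum>j\<in>J. \<Sum>k\<in>K. f i j k) = (\<Sum>i\<in>I. \<Sum>k\<in>K. \<Sum>j\<in>J. f i j k)"
    by (rule sum.cong[OF refl], rule sum.swap)
  also have "\<dots> = (\<Sum>k\<in>K. \<Sum>i\<in>I. \<Sum>j\<in>J. f i j k)" by (rule sum.swap)
  also have "\<dots> = (\<Sum>k\<in>K. \<Sum>j\<in>J. \<Sum>i\<in>I. f i j k)"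
    by (rule sum.cong[OF refl], rule sum.swap)
  finally show ?thesis .
qed

lemma comm_skew_inner:
  fixes X A B :: "real^'n^'n"
  assumes "transpose X = - X"
  shows "inner (commutator X A) B = - inner A (commutator X B)"
proof -
  have sk: "\<And>i j. X$j$i = - X$i$j" using skew_entry[OF assms] by blast
  have 1: "(\<Sum>i\<in>UNIV. \<Sum>j\<in>UNIV. (\<Sum>k\<in>UNIV. X$i$k * A$k$j) * B$i$j)
         = (\<Sum>i\<in>UNIV. \<Sum>j\<in>UNIV. A$i$j * (\<Sum>k\<in>UNIV. X$k$i * B$k$j))"
  proof -
    have "(\<Sum>i\<in>UNIV. \<Sum>j\<in>UNIV. (\<Sum>k\<in>UNIV. X$i$k * A$k$j) * B$i$j)
        = (\<Sum>i\<in>UNIV. \<Sum>j\<in>UNIV. \<Sum>k\<in>UNIV. X$i$k * A$k$j * B$i$j)"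
      by (simp add: sum_distrib_right)
    also have "\<dots> = (\<Sum>k\<in>UNIV. \<Sum>j\<in>UNIV. \<Sum>i\<in>UNIV. X$i$k * A$k$j * B$i$j)"
      by (rule swap3)
    also have "\<dots> = (\<Sum>k\<in>UNIV. \<Sum>j\<in>UNIV. A$k$j * (\<Sum>i\<in>UNIV. X$i$k * B$i$j))"
      by (simp add: sum_distrib_left mult_ac)
    finally show ?thesis .
  qed
  have 2: "(\<Sum>i\<in>UNIV. \<Sum>j\<in>UNIV. (\<Sum>k\<in>UNIV. A$i$k * X$k$j) * B$i$j)
         = (\<Sum>i\<in>UNIV. \<Sum>j\<in>UNIV. A$i$j * (\<Sum>k\<in>UNIV. B$i$k * X$j$k))"
  proof -
    have "(\<Sum>i\<in>UNIV. \<Sum>j\<in>UNIV. (\<Sum>k\<in>UNIV. A$i$k * X$k$j) * B$i$j)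
        = (\<Sum>i\<in>UNIV. \<Sum>j\<in>UNIV. \<Sum>k\<in>UNIV. A$i$k * X$k$j * B$i$j)"
      by (simp add: sum_distrib_right)
    also have "\<dots> = (\<Sum>i\<in>UNIV. \<Sum>k\<in>UNIV. \<Sum>j\<in>UNIV. A$i$k * X$k$j * B$i$j)"
      by (rule sum.cong[OF refl], rule sum.swap)
    also have "\<dots> = (\<Sum>i\<in>UNIV. \<Sum>k\<in>UNIV. A$i$k * (\<Sum>j\<in>UNIV. B$i$j * X$k$j))"
      by (simp add: sum_distrib_left mult_ac)
    finally show ?thesis .
  qed
  have "inner (commutator X A) B = (\<Sum>i\<in>UNIV. \<Sum>j\<in>UNIV. ((\<Sum>k\<in>UNIV. X$i$k * A$k$j) - (\<Sum>k\<in>UNIV. A$i$k * X$k$j)) * B$i$j)"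
    by (simp add: commutator_def inner_vec_def matrix_matrix_mult_def)
  also have "\<dots> = (\<Sum>i\<in>UNIV. \<Sum>j\<in>UNIV. (\<Sum>k\<in>UNIV. X$i$k * A$k$j) * B$i$j) - (\<Sum>i\<in>UNIV. \<Sum>j\<in>UNIV. (\<Sum>k\<in>UNIV. A$i$k * X$k$j) * B$i$j)"
    by (simp add: left_diff_distrib sum_subtractf)
  also have "\<dots> = (\<Sum>i\<in>UNIV. \<Sum>j\<in>UNIV. A$i$j * (\<Sum>k\<in>UNIV. X$k$i * B$k$j)) - (\<Sum>i\<in>UNIV. \<Sum>j\<in>UNIV. A$i$j * (\<Sum>k\<in>UNIV. B$i$k * X$j$k))"
    using 1 2 by simp
  also have "\<dots> = - (\<Sum>i\<in>UNIV. \<Sum>j\<in>UNIV. A$i$j * ((\<Sum>k\<in>UNIV. X$i$k * B$k$j) - (\<Sum>k\<in>UNIV. B$i$k * X$k$j)))"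
  proof -
    have a: "(\<Sum>k\<in>UNIV. X$k$i * B$k$j) = - (\<Sum>k\<in>UNIV. X$i$k * B$k$j)" for i j
      by (simp add: sk[of i _] sum_negf)
    have b: "(\<Sum>k\<in>UNIV. B$i$k * X$j$k) = - (\<Sum>k\<in>UNIV. B$i$k * X$k$j)" for i j
      by (simp add: sk[of _ j] sum_negf)
    show ?thesis by (simp add: a b right_diff_distrib sum_subtractf sum_negf)
  qed
  also have "\<dots> = - inner A (commutator X B)"
    by (simp add: commutator_def inner_vec_def matrix_matrix_mult_def)
  finally show ?thesis .
qed


lemma skew_zero0:
  fixes S :: "'a::real_inner \<Rightarrow> 'a"
  assumes sk: "\<And>u v. inner (S u) v = - inner u (S v)"
  shows "S 0 = 0"
proof -
  have "inner (S 0) (S 0) = 0" using sk[of 0 "S 0"] by simp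
  then show ?thesis by simp
qed

lemma skew_pow_zero0:
  fixes S :: "'a::real_inner \<Rightarrow> 'a"
  assumes sk: "\<And>u v. inner (S u) v = - inner u (S v)"
  shows "(S ^^ k) 0 = 0"
  by (induction k) (simp_all add: skew_zero0[OF sk])

lemma skew_pow:
  fixes S :: "'a::real_inner \<Rightarrow> 'a"
  assumes sk: "\<And>u v. inner (S u) v = - inner u (S v)"
  shows "inner ((S ^^ k) u) v = (-1)^k * inner u ((S ^^ k) v)"
proof (induction k arbitrary: v)
  case 0
  then show ?case by simp
next
  case (Suc k)
  have "inner ((S ^^ Suc k) u) v = inner (S ((S ^^ k) u)) v" by simp
  also have "\<dots> = - inner ((S ^^ k) u) (S v)" by (rule sk)
  also have "\<dots> = - ((-1)^k * inner u ((S ^^ k) (S v)))" using Suc by simp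
  also have "(S ^^ k) (S v) = (S ^^ Suc k) v" by (simp add: funpow_swap1)
  finally show ?case by simp
qed

lemma skew_nil_step:
  fixes S :: "'a::real_inner \<Rightarrow> 'a"
  assumes sk: "\<And>u v. inner (S u) v = - inner u (S v)"
    and nil: "\<forall>u\<in>W. (S ^^ Suc (Suc k)) u = 0"
  shows "\<forall>u\<in>W. (S ^^ Suc k) u = 0"
proof
  fix u assume u: "u \<in> W"
  have "inner ((S ^^ Suc k) u) ((S ^^ Suc k) u) = (-1)^(Suc k) * inner u ((S ^^ Suc k) ((S ^^ Suc k) u))"
    by (rule skew_pow[OF sk])
  also have "(S ^^ Suc k) ((S ^^ Suc k) u) = (S ^^ k) ((S ^^ Suc (Suc k)) u)"
    by (metis funpow_add o_apply add_Suc add_Suc_right add.commute)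
  also have "\<dots> = 0" using nil u skew_pow_zero0[OF sk] by simp
  finally show "(S ^^ Suc k) u = 0" by simp
qed

lemma skew_nil:
  fixes S :: "'a::real_inner \<Rightarrow> 'a"
  assumes sk: "\<And>u v. inner (S u) v = - inner u (S v)"
  shows "\<forall>u\<in>W. (S ^^ Suc k) u = 0 \<Longrightarrow> \<forall>u\<in>W. S u = 0"
proof (induction k)
  case 0
  then show ?case by simp
next
  case (Suc k)
  then show ?case using skew_nil_step[OF sk, of W k] by blast
qed

lemma so_0: "0 \<in> so_alg" by (simp add: so_alg_def transpose_def vec_eq_iff)

lemma so_transpose_add: "transpose (A + B) = transpose A + transpose (B::real^'n^'n)"
  by (simp add: transpose_def vec_eq_iff)

lemma so_transpose_diff: "transpose (A - B) = transpose A - transpose (B::real^'n^'n)"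
  by (simp add: transpose_def vec_eq_iff)

lemma so_add: "A \<in> so_alg \<Longrightarrow> B \<in> so_alg \<Longrightarrow> A + B \<in> so_alg"
  by (simp add: so_alg_def so_transpose_add)

lemma so_diff: "A \<in> so_alg \<Longrightarrow> B \<in> so_alg \<Longrightarrow> A - B \<in> so_alg"
  by (simp add: so_alg_def so_transpose_diff)

lemma so_scale: "A \<in> so_alg \<Longrightarrow> c *\<^sub>R A \<in> so_alg"
  by (simp add: so_alg_def transpose_scalar)

lemma mm_neg: "(- A) ** (- B) = A ** (B::real^'n^'n)"
  by (simp add: matrix_matrix_mult_def vec_eq_iff)

lemma mm_add_r: "(A + B) ** C = A ** C + B ** (C::real^'n^'n)"
  by (simp add: matrix_matrix_mult_def vec_eq_iff sum.distrib algebra_simps)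

lemma mm_diff_l: "C ** (A - B) = C ** A - C ** (B::real^'n^'n)"
  by (simp add: matrix_matrix_mult_def vec_eq_iff sum_subtractf algebra_simps)

lemma mm_diff_r: "(A - B) ** C = A ** C - B ** (C::real^'n^'n)"
  by (simp add: matrix_matrix_mult_def vec_eq_iff sum_subtractf algebra_simps)

lemma so_comm: "A \<in> so_alg \<Longrightarrow> B \<in> so_alg \<Longrightarrow> commutator A B \<in> so_alg"
  by (simp add: so_alg_def commutator_def so_transpose_diff matrix_transpose_mul mm_neg)

lemma comm_add_right: "commutator X (A + B) = commutator X A + commutator X (B::real^'n^'n)"
  by (simp add: commutator_def matrix_add_ldistrib mm_add_r algebra_simps)

lemma comm_diff_right: "commutator X (A - B) = commutator X A - commutator X (B::real^'n^'n)"
  by (simp add: commutator_def mm_diff_l mm_diff_r algebra_simps)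

lemma comm_scale_right: "commutator X (c *\<^sub>R A) = c *\<^sub>R commutator X (A::real^'n^'n)"
  by (simp add: commutator_def matrix_scalar_ac scalar_matrix_assoc[symmetric] scaleR_diff_right)


lemma proj_unique:
  assumes st: "subspace t" and c: "complement_in tc t h" and a: "a \<in> t" and b: "b \<in> tc"
  shows "proj_along t tc (a + b) = a"
  unfolding proj_along_def
proof (rule the_equality)
  show "a \<in> t \<and> a + b - a \<in> tc" using a b by simp
next
  fix a' assume h: "a' \<in> t \<and> a + b - a' \<in> tc"
  have stc: "subspace tc" using c by (simp add: complement_in_def)
  have "a - a' \<in> t" using st a h by (simp add: subspace_diff)
  moreover have "a - a' = (a + b - a') - b" by simp
  then have "a - a' \<in> tc" using stc h b by (metis subspace_diff)
  ultimately have "a - a' \<in> t \<inter> tc" by simp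
  then have "a - a' = 0" using c unfolding complement_in_def by blast
  then show "a' = a" by simp
qed

lemma proj_props:
  assumes st: "subspace t" and c: "complement_in tc t h" and X: "X \<in> h"
  shows "proj_along t tc X \<in> t \<and> X - proj_along t tc X \<in> tc"
proof -
  obtain a b where ab: "a \<in> t" "b \<in> tc" "X = a + b" using c X by (auto simp: complement_in_def)
  then show ?thesis using proj_unique[OF st c ab(1,2)] by simp
qed

lemma proj_add:
  assumes st: "subspace t" and c: "complement_in tc t h" and X: "X \<in> h" and Y: "Y \<in> h"
  shows "proj_along t tc (X + Y) = proj_along t tc X + proj_along t tc Y"
proof -
  let ?P = "proj_along t tc"
  have stc: "subspace tc" using c by (simp add: complement_in_def)
  have 1: "?P X + ?P Y \<in> t" using proj_props[OF st c X] proj_props[OF st c Y] st by (simp add: subspace_add)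
  have 2: "(X - ?P X) + (Y - ?P Y) \<in> tc" using proj_props[OF st c X] proj_props[OF st c Y] stc by (simp add: subspace_add)
  have "X + Y = (?P X + ?P Y) + ((X - ?P X) + (Y - ?P Y))" by simp
  then show ?thesis using proj_unique[OF st c 1 2] by simp
qed

lemma proj_scale:
  assumes st: "subspace t" and c: "complement_in tc t h" and X: "X \<in> h"
  shows "proj_along t tc (r *\<^sub>R X) = r *\<^sub>R proj_along t tc X"
proof -
  let ?P = "proj_along t tc"
  have stc: "subspace tc" using c by (simp add: complement_in_def)
  have 1: "r *\<^sub>R ?P X \<in> t" using proj_props[OF st c X] st by (simp add: subspace_scale)
  have 2: "r *\<^sub>R (X - ?P X) \<in> tc" using proj_props[OF st c X] stc by (simp add: subspace_scale)
  have "r *\<^sub>R X = r *\<^sub>R ?P X + r *\<^sub>R (X - ?P X)" by (simp add: scaleR_diff_right)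
  then show ?thesis using proj_unique[OF st c 1 2] by simp
qed

lemma proj_t:
  assumes st: "subspace t" and c: "complement_in tc t h" and X: "X \<in> t"
  shows "proj_along t tc X = X"
proof -
  have "0 \<in> tc" using c by (auto simp: complement_in_def subspace_0)
  then show ?thesis using proj_unique[OF st c X, of 0] by simp
qed

lemma proj_tc:
  assumes st: "subspace t" and c: "complement_in tc t h" and X: "X \<in> tc"
  shows "proj_along t tc X = 0"
  using proj_unique[OF st c _ X, of 0] st by (simp add: subspace_0)


lemma ev_pos: "eventually (\<lambda>e::real. e > 0) (at_right 0)"
  by (simp add: eventually_at_filter)

lemma br_formula:
  assumes lt: "lie_subalgebra t so_alg" and c: "complement_in tc t so_alg"
    and cb: "is_contraction_bracket so_alg t tc br"
    and X: "X \<in> t" and Y: "Y \<in> so_alg"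
  shows "br X Y = commutator X (proj_along t tc Y)
     + (commutator X (Y - proj_along t tc Y) - proj_along t tc (commutator X (Y - proj_along t tc Y)))"
proof -
  let ?P = "proj_along t tc"
  have st: "subspace t" and tso: "t \<subseteq> so_alg" and tcl: "\<forall>A\<in>t. \<forall>B\<in>t. commutator A B \<in> t"
    using lt by (auto simp: lie_subalgebra_def)
  have tcso: "tc \<subseteq> so_alg" using c by (simp add: complement_in_def)
  have Xso: "X \<in> so_alg" using X tso by blast
  define u where "u = commutator X (?P Y)"
  define w where "w = commutator X (Y - ?P Y)"
  have PY: "?P Y \<in> t" "Y - ?P Y \<in> tc" using proj_props[OF st c Y] by auto
  have ut: "u \<in> t" using tcl X PY unfolding u_def by blast
  have uso: "u \<in> so_alg" using ut tso by blast
  have wso: "w \<in> so_alg" unfolding w_def using so_comm[OF Xso] PY tcso by blast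
  have PX: "?P X = X" by (rule proj_t[OF st c X])
  have Pu: "?P u = u" by (rule proj_t[OF st c ut])
  have eq: "contr_phi_inv t tc e (commutator (contr_phi t tc e X) (contr_phi t tc e Y))
      = u + e *\<^sub>R ?P w + (w - ?P w)" if e: "e > 0" for e
  proof -
    have "contr_phi t tc e X = X" by (simp add: contr_phi_def PX)
    moreover have "contr_phi t tc e Y = ?P Y + e *\<^sub>R (Y - ?P Y)" by (simp add: contr_phi_def)
    ultimately have 1: "commutator (contr_phi t tc e X) (contr_phi t tc e Y) = u + e *\<^sub>R w"
      by (simp add: comm_add_right comm_scale_right u_def w_def)
    have ew: "e *\<^sub>R w \<in> so_alg" using so_scale[OF wso] .
    have 2: "?P (u + e *\<^sub>R w) = u + e *\<^sub>R ?P w"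
      using proj_add[OF st c uso ew] proj_scale[OF st c wso] Pu by simp
    have "contr_phi_inv t tc e (u + e *\<^sub>R w) = u + e *\<^sub>R ?P w + (1/e) *\<^sub>R (e *\<^sub>R w - e *\<^sub>R ?P w)"
      by (simp add: contr_phi_inv_def 2)
    also have "\<dots> = u + e *\<^sub>R ?P w + (w - ?P w)" using e by (simp add: scaleR_diff_right)
    finally show ?thesis using 1 by simp
  qed
  have lim1: "((\<lambda>e::real. u + e *\<^sub>R ?P w + (w - ?P w)) \<longlongrightarrow> u + (0::real) *\<^sub>R ?P w + (w - ?P w)) (at_right 0)"
    by (intro tendsto_intros)
  have lim2: "((\<lambda>e. contr_phi_inv t tc e (commutator (contr_phi t tc e X) (contr_phi t tc e Y)))
      \<longlongrightarrow> u + (w - ?P w)) (at_right 0)"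
    using Lim_transform_eventually[OF lim1, of "\<lambda>e. contr_phi_inv t tc e (commutator (contr_phi t tc e X) (contr_phi t tc e Y))"]
      eventually_mono[OF ev_pos, of "\<lambda>e. u + e *\<^sub>R ?P w + (w - ?P w) = contr_phi_inv t tc e (commutator (contr_phi t tc e X) (contr_phi t tc e Y))"] eq
    by simp
  have lim3: "((\<lambda>e. contr_phi_inv t tc e (commutator (contr_phi t tc e X) (contr_phi t tc e Y)))
      \<longlongrightarrow> br X Y) (at_right 0)"
    using cb Xso Y by (simp add: is_contraction_bracket_def)
  have "br X Y = u + (w - ?P w)"
    using tendsto_unique[OF _ lim3 lim2] by (simp add: trivial_limit_at_right_real)
  then show ?thesis by (simp add: u_def w_def)
qed


lemma br_zero:
  assumes lt: "lie_subalgebra t so_alg" and c: "complement_in tc t so_alg"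
    and cb: "is_contraction_bracket so_alg t tc br"
    and t0: "\<forall>Z\<in>t. Z = 0"
    and X: "X \<in> so_alg" and Y: "Y \<in> so_alg"
  shows "br X Y = 0"
proof -
  let ?P = "proj_along t tc"
  have st: "subspace t" using lt by (auto simp: lie_subalgebra_def)
  have P0: "?P Z = 0" if "Z \<in> so_alg" for Z
    using proj_props[OF st c that] t0 by blast
  have eq: "contr_phi_inv t tc e (commutator (contr_phi t tc e X) (contr_phi t tc e Y))
      = e *\<^sub>R commutator X Y" if e: "e > 0" for e
  proof -
    have 1: "commutator (contr_phi t tc e X) (contr_phi t tc e Y) = (e*e) *\<^sub>R commutator X Y"
      by (simp add: contr_phi_def P0 X Y commutator_def matrix_scalar_ac scalar_matrix_assoc[symmetric] scaleR_diff_right)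
    have "(e*e) *\<^sub>R commutator X Y \<in> so_alg" using so_scale so_comm X Y by blast
    then show ?thesis using 1 e by (simp add: contr_phi_inv_def P0)
  qed
  have lim1: "((\<lambda>e::real. e *\<^sub>R commutator X Y) \<longlongrightarrow> (0::real) *\<^sub>R commutator X Y) (at_right 0)"
    by (intro tendsto_intros)
  have lim2: "((\<lambda>e. contr_phi_inv t tc e (commutator (contr_phi t tc e X) (contr_phi t tc e Y)))
      \<longlongrightarrow> 0) (at_right 0)"
    using Lim_transform_eventually[OF lim1, of "\<lambda>e. contr_phi_inv t tc e (commutator (contr_phi t tc e X) (contr_phi t tc e Y))"]
      eventually_mono[OF ev_pos, of "\<lambda>e. e *\<^sub>R commutator X Y = contr_phi_inv t tc e (commutator (contr_phi t tc e X) (contr_phi t tc e Y))"] eq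
    by simp
  have lim3: "((\<lambda>e. contr_phi_inv t tc e (commutator (contr_phi t tc e X) (contr_phi t tc e Y)))
      \<longlongrightarrow> br X Y) (at_right 0)"
    using cb X Y by (simp add: is_contraction_bracket_def)
  show "br X Y = 0"
    using tendsto_unique[OF _ lim3 lim2] by (simp add: trivial_limit_at_right_real)
qed

definition pos :: "'n::{finite,linorder} \<Rightarrow> nat" where
  "pos i = card {x. x < i}"

lemma pos_mono: "(i::'n::{finite,linorder}) < j \<Longrightarrow> pos i < pos j"
  unfolding pos_def by (rule psubset_card_mono) auto

lemma pos_bound: "pos (i::'n::{finite,linorder}) < CARD('n)"
  unfolding pos_def by (rule psubset_card_mono) auto

definition lowk :: "nat \<Rightarrow> (real^('n::{finite,linorder})^('n::{finite,linorder})) set" where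
  "lowk k = {A. \<forall>i j. pos i < pos j + k \<longrightarrow> A$i$j = 0}"

lemma slt_low1: "(A::real^('n::{finite,linorder})^('n::{finite,linorder})) \<in> slt_alg \<Longrightarrow> A \<in> lowk 1"
  unfolding slt_alg_def lowk_def
proof (intro CollectI allI impI)
  fix i j :: "'n::{finite,linorder}"
  assume A: "A \<in> {A. \<forall>i j. i \<le> j \<longrightarrow> A $ i $ j = 0}" and p: "pos i < pos j + 1"
  have "\<not> j < i" using p pos_mono[of j i] by linarith
  then have "i \<le> j" by simp
  then show "A $ i $ j = 0" using A by blast
qed

lemma low_mult: "(A::real^('n::{finite,linorder})^('n::{finite,linorder})) \<in> lowk a \<Longrightarrow> B \<in> lowk b \<Longrightarrow> A ** B \<in> lowk (a + b)"
  unfolding lowk_def matrix_matrix_mult_def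
proof (clarsimp)
  fix i j :: "'n::{finite,linorder}"
  assume A: "\<forall>i j. pos i < pos j + a \<longrightarrow> A $ i $ j = 0"
    and B: "\<forall>i j. pos i < pos j + b \<longrightarrow> B $ i $ j = 0"
    and ij: "pos i < pos j + (a + b)"
  have "A$i$k * B$k$j = 0" for k :: "'n::{finite,linorder}"
  proof (cases "pos i < pos k + a")
    case True then show ?thesis using A by simp
  next
    case False
    then have "pos k < pos j + b" using ij by simp
    then show ?thesis using B by simp
  qed
  then show "(\<Sum>k\<in>UNIV. A $ i $ k * B $ k $ j) = 0" by (intro sum.neutral) blast
qed

lemma low_diff: "A \<in> lowk a \<Longrightarrow> B \<in> lowk a \<Longrightarrow> A - B \<in> lowk a"
  unfolding lowk_def by simp

lemma low_comm: "A \<in> lowk 1 \<Longrightarrow> B \<in> lowk k \<Longrightarrow> commutator A B \<in> lowk (Suc k)"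
  unfolding commutator_def
  using low_mult[of A 1 B k] low_mult[of B k A 1] low_diff by (simp add: add.commute)

lemma low_pow: "A \<in> lowk 1 \<Longrightarrow> B \<in> lowk 1 \<Longrightarrow> ((commutator A) ^^ k) B \<in> lowk (Suc k)"
  by (induction k) (simp_all add: low_comm)

lemma low_card: "(A::real^('n::{finite,linorder})^('n::{finite,linorder})) \<in> lowk CARD('n) \<Longrightarrow> A = 0"
proof -
  assume A: "A \<in> lowk CARD('n)"
  have "A$i$j = 0" for i j :: "'n::{finite,linorder}"
  proof -
    have "pos i < pos j + CARD('n)" using pos_bound[of i] by linarith
    then show ?thesis using A unfolding lowk_def by blast
  qed
  then show "A = 0" by (simp add: vec_eq_iff)
qed


lemma sum_delta_r: "(\<Sum>k\<in>UNIV. (f::'a::finite\<Rightarrow>real) k * (if k = q then 1 else 0)) = (f q :: real)"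
proof -
  have "(\<Sum>k\<in>UNIV. f k * (if k = q then 1 else 0)) = (\<Sum>k\<in>UNIV. if k = q then f k else 0)"
    by (rule sum.cong) auto
  then show ?thesis by simp
qed

lemma sum_delta_l: "(\<Sum>k\<in>UNIV. (if k = q then 1 else 0) * (f::'a::finite\<Rightarrow>real) k) = (f q :: real)"
  using sum_delta_r[of f q] by (simp add: mult.commute)

lemma central_zero:
  fixes X :: "real^'n^'n"
  assumes card: "CARD('n) \<ge> 3" and X: "X \<in> so_alg" and cen: "\<forall>Y\<in>so_alg. commutator X Y = 0"
  shows "X = 0"
proof -
  have sk: "\<And>i j. X$j$i = - X$i$j" using skew_entry X by (auto simp: so_alg_def)
  have "X$p$q = 0" for p q
  proof (cases "p = q")
    case True
    then show ?thesis using sk[of p p] by simp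
  next
    case False
    have "\<not> (UNIV::'n set) \<subseteq> {p, q}"
    proof
      assume "(UNIV::'n set) \<subseteq> {p, q}"
      then have "CARD('n) \<le> card {p, q}" by (intro card_mono) auto
      also have "\<dots> \<le> 2" by (simp add: card_insert_le_m1)
      finally show False using card by simp
    qed
    then obtain r where r: "r \<noteq> p" "r \<noteq> q" by blast
    define E :: "real^'n^'n" where "E = (\<chi> i j. if i = q \<and> j = r then 1 else if i = r \<and> j = q then -1 else 0)"
    have Eso: "E \<in> so_alg" unfolding so_alg_def E_def using r by (auto simp: transpose_def vec_eq_iff)
    have e1: "E$k$r = (if k = q then 1 else 0)" for k using r by (simp add: E_def)
    have e2: "E$p$k = 0" for k using r False by (simp add: E_def)
    have "(X ** E) $ p $ r = X$p$q"
      by (simp add: matrix_matrix_mult_def e1 sum_delta_r)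
    moreover have "(E ** X) $ p $ r = 0"
      by (simp add: matrix_matrix_mult_def e2)
    ultimately have "commutator X E $ p $ r = X$p$q" by (simp add: commutator_def)
    then show ?thesis using cen Eso by simp
  qed
  then show ?thesis by (simp add: vec_eq_iff)
qed

lemma slt_not_abelian:
  assumes card: "CARD('n::{finite,linorder}) \<ge> 3"
  shows "\<exists>A\<in>(slt_alg::(real^('n::{finite,linorder})^('n::{finite,linorder})) set). \<exists>B\<in>slt_alg. commutator A B \<noteq> 0"
proof -
  define a :: "'n::{finite,linorder}" where "a = Min UNIV"
  define b :: "'n::{finite,linorder}" where "b = Min (UNIV - {a})"
  define c :: "'n::{finite,linorder}" where "c = Min (UNIV - {a, b})"
  have ne1: "UNIV - {a} \<noteq> {}"
  proof
    assume "UNIV - {a} = {}"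
    then have "(UNIV::'n::{finite,linorder} set) \<subseteq> {a}" by blast
    then have "CARD('n) \<le> 1" using card_mono[of "{a}" UNIV] by simp
    then show False using card by simp
  qed
  have ne2: "UNIV - {a, b} \<noteq> {}"
  proof
    assume "UNIV - {a, b} = {}"
    then have "(UNIV::'n::{finite,linorder} set) \<subseteq> {a, b}" by blast
    then have "CARD('n) \<le> card {a, b}" using card_mono[of "{a,b}" UNIV] by simp
    also have "\<dots> \<le> 2" by (simp add: card_insert_le_m1)
    finally show False using card by simp
  qed
  have bin: "b \<in> UNIV - {a}" unfolding b_def using ne1 by (intro Min_in) auto
  have cin: "c \<in> UNIV - {a, b}" unfolding c_def using ne2 by (intro Min_in) auto
  have ab: "a < b"
  proof -
    have "a \<le> b" unfolding a_def by simp
    then show ?thesis using bin by auto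
  qed
  have bc: "b < c"
  proof -
    have "b \<le> c" unfolding b_def using cin by (intro Min_le) auto
    then show ?thesis using cin by auto
  qed
  define A :: "real^('n::{finite,linorder})^('n::{finite,linorder})" where "A = (\<chi> i j. if i = c \<and> j = b then 1 else 0)"
  define B :: "real^('n::{finite,linorder})^('n::{finite,linorder})" where "B = (\<chi> i j. if i = b \<and> j = a then 1 else 0)"
  have A: "A \<in> slt_alg" unfolding slt_alg_def A_def using bc by auto
  have B: "B \<in> slt_alg" unfolding slt_alg_def B_def using ab by auto
  have e1: "A$c$k = (if k = b then 1 else 0)" for k by (simp add: A_def)
  have e2: "B$k$a = (if k = b then 1 else 0)" for k by (simp add: B_def)
  have e3: "B$c$k = 0" for k using bc by (auto simp add: B_def)
  have "(A ** B) $ c $ a = 1"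
    using sum_delta_l[of b "\<lambda>k. if k = b then 1 else 0"] by (simp add: matrix_matrix_mult_def e1 e2)
  moreover have "(B ** A) $ c $ a = 0"
    by (simp add: matrix_matrix_mult_def e3)
  ultimately have "commutator A B $ c $ a = 1" by (simp add: commutator_def)
  then have "commutator A B \<noteq> 0" by auto
  then show ?thesis using A B by blast
qed


theorem lemma2p5:
  fixes t tc :: "(real^('n::{finite,linorder})^('n::{finite,linorder})) set"
    and br :: "real^('n::{finite,linorder})^('n::{finite,linorder}) \<Rightarrow> real^('n::{finite,linorder})^('n::{finite,linorder}) \<Rightarrow> real^('n::{finite,linorder})^('n::{finite,linorder})"
  assumes "CARD('n) \<ge> 3"
    and "lie_subalgebra t so_alg"
    and "complement_in tc t so_alg"
    and "is_contraction_bracket so_alg t tc br"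
  shows "\<not> (\<exists>f. lie_iso_onto so_alg br slt_alg f)"
proof
  note card = assms(1) and lt = assms(2) and c = assms(3) and cb = assms(4)
  assume "\<exists>f. lie_iso_onto so_alg br slt_alg f"
  then obtain f where fiso: "lie_iso_onto so_alg br slt_alg f" by blast
  have
    flin: "\<And>a b X Y. X \<in> so_alg \<Longrightarrow> Y \<in> so_alg \<Longrightarrow> f (a *\<^sub>R X + b *\<^sub>R Y) = a *\<^sub>R f X + b *\<^sub>R f Y"
    and finj: "inj_on f so_alg" and fonto: "f ` so_alg = slt_alg"
    and fbr: "\<And>X Y. X \<in> so_alg \<Longrightarrow> Y \<in> so_alg \<Longrightarrow> f (br X Y) = commutator (f X) (f Y)"
    using fiso unfolding lie_iso_onto_def by auto
  have f0: "f 0 = 0" using flin[OF so_0 so_0, of 0 0] by simp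
  let ?P = "proj_along t tc"
  have st: "subspace t" and tso: "t \<subseteq> so_alg" and tcl: "\<forall>A\<in>t. \<forall>B\<in>t. commutator A B \<in> t"
    using lt by (auto simp: lie_subalgebra_def)
  have tcso: "tc \<subseteq> so_alg" and stc: "subspace tc" using c by (auto simp: complement_in_def)
  have P0: "?P 0 = 0" using proj_t[OF st c subspace_0[OF st]] .
  have Pt: "?P Z \<in> t" "Z - ?P Z \<in> tc" "?P Z \<in> so_alg" "Z - ?P Z \<in> so_alg" if "Z \<in> so_alg" for Z
    using proj_props[OF st c that] tso tcso by auto
  define N where "N = CARD('n) - 1"
  have SN: "Suc N = CARD('n)" using card unfolding N_def by simp
  have t0: "\<forall>X\<in>t. X = 0"
  proof
    fix X assume X: "X \<in> t"
    have Xso: "X \<in> so_alg" using X tso by blast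
    define D where "D = br X"
    define ad where "ad = commutator X"
    have adso: "ad Y \<in> so_alg" if "Y \<in> so_alg" for Y using so_comm[OF Xso that] unfolding ad_def .
    have Dform: "D Y = ad (?P Y) + (ad (Y - ?P Y) - ?P (ad (Y - ?P Y)))" if "Y \<in> so_alg" for Y
      using br_formula[OF lt c cb X that] unfolding D_def ad_def .
    have adPt: "ad (?P Y) \<in> t" if "Y \<in> so_alg" for Y using tcl X Pt(1)[OF that] unfolding ad_def by blast
    have adQ: "ad (Y - ?P Y) \<in> so_alg" if "Y \<in> so_alg" for Y using adso Pt(4)[OF that] by blast
    have Dso: "D Y \<in> so_alg" if "Y \<in> so_alg" for Y
    proof -
      have "ad (?P Y) \<in> so_alg" using adPt[OF that] tso by blast
      then show ?thesis using Dform[OF that] so_add Pt(4)[OF adQ[OF that]] by simp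
    qed
    have PD: "?P (D Y) = ad (?P Y)" if "Y \<in> so_alg" for Y
      using Dform[OF that] proj_unique[OF st c adPt[OF that] Pt(2)[OF adQ[OF that]]] by simp
    have Qlem: "ad W - ?P (ad W) = ad (W - ?P W) - ?P (ad (W - ?P W))" if W: "W \<in> so_alg" for W
    proof -
      have 1: "ad W = ad (?P W) + ad (W - ?P W)"
        unfolding ad_def by (simp add: comm_add_right[symmetric])
      have 2: "?P (ad W) = ad (?P W) + ?P (ad (W - ?P W))"
        using 1 proj_add[OF st c adso[OF Pt(3)[OF W]] adQ[OF W]] proj_t[OF st c adPt[OF W]] by simp
      show ?thesis using 1 2 by simp
    qed
    have QD: "D Y - ?P (D Y) = ad Y - ?P (ad Y)" if "Y \<in> so_alg" for Y
      using Dform[OF that] PD[OF that] Qlem[OF that] by simp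
    have Dkso: "(D ^^ k) Y \<in> so_alg" if "Y \<in> so_alg" for Y k
      using that by (induction k) (simp_all add: Dso)
    have adkso: "(ad ^^ k) Y \<in> so_alg" if "Y \<in> so_alg" for Y k
      using that by (induction k) (simp_all add: adso)
    have fD: "f ((D ^^ k) Y) = ((commutator (f X)) ^^ k) (f Y)" if "Y \<in> so_alg" for Y k
    proof (induction k)
      case 0 then show ?case by simp
    next
      case (Suc k)
      have "f ((D ^^ Suc k) Y) = f (br X ((D ^^ k) Y))" by (simp add: D_def)
      also have "\<dots> = commutator (f X) (f ((D ^^ k) Y))" using fbr[OF Xso Dkso[OF that]] .
      finally show ?case using Suc by simp
    qed
    have Dnil: "(D ^^ N) Y = 0" if "Y \<in> so_alg" for Y
    proof -
      have fX: "f X \<in> lowk 1" using fonto Xso slt_low1 by blast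
      have fY: "f Y \<in> lowk 1" using fonto that slt_low1 by blast
      have "((commutator (f X)) ^^ N) (f Y) \<in> lowk (Suc N)" using low_pow[OF fX fY] .
      then have "f ((D ^^ N) Y) = 0" using fD[OF that] low_card SN by simp
      then have "f ((D ^^ N) Y) = f 0" using f0 by simp
      then show ?thesis using finj Dkso[OF that] so_0 by (auto dest: inj_onD)
    qed
    have Pk: "?P ((D ^^ k) Y) = (ad ^^ k) (?P Y)" if "Y \<in> so_alg" for Y k
    proof (induction k)
      case 0 then show ?case by simp
    next
      case (Suc k)
      have "?P ((D ^^ Suc k) Y) = ?P (D ((D ^^ k) Y))" by simp
      also have "\<dots> = ad (?P ((D ^^ k) Y))" using PD[OF Dkso[OF that]] .
      finally show ?case using Suc by simp
    qed
    have Qk: "(D ^^ k) Y - ?P ((D ^^ k) Y) = (ad ^^ k) Y - ?P ((ad ^^ k) Y)" if "Y \<in> so_alg" for Y k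
    proof (induction k)
      case 0 then show ?case by simp
    next
      case (Suc k)
      let ?Z = "(D ^^ k) Y" and ?W = "(ad ^^ k) Y"
      have "(D ^^ Suc k) Y - ?P ((D ^^ Suc k) Y) = D ?Z - ?P (D ?Z)" by simp
      also have "\<dots> = ad ?Z - ?P (ad ?Z)" using QD[OF Dkso[OF that]] .
      also have "\<dots> = ad (?Z - ?P ?Z) - ?P (ad (?Z - ?P ?Z))" using Qlem[OF Dkso[OF that]] .
      also have "\<dots> = ad (?W - ?P ?W) - ?P (ad (?W - ?P ?W))" using Suc by simp
      also have "\<dots> = ad ?W - ?P (ad ?W)" using Qlem[OF adkso[OF that]] by simp
      finally show ?case by simp
    qed
    have adNt: "(ad ^^ N) Z = 0" if "Z \<in> t" for Z
    proof -
      have Zso: "Z \<in> so_alg" using that tso by blast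
      have "(ad ^^ N) (?P Z) = 0" using Pk[OF Zso, of N] Dnil[OF Zso] P0 by simp
      then show ?thesis using proj_t[OF st c that] by simp
    qed
    have adNin: "(ad ^^ N) Y \<in> t" if "Y \<in> so_alg" for Y
    proof -
      have "(ad ^^ N) Y - ?P ((ad ^^ N) Y) = 0" using Qk[OF that, of N] Dnil[OF that] P0 by simp
      then have e: "(ad ^^ N) Y = ?P ((ad ^^ N) Y)" by simp
      have "?P ((ad ^^ N) Y) \<in> t" using Pt(1)[OF adkso[OF that]] .
      then show ?thesis by (subst e)
    qed
    have nil2: "\<forall>Y\<in>so_alg. (ad ^^ Suc (N + N - 1)) Y = 0"
    proof
      fix Y :: "real^('n::{finite,linorder})^('n::{finite,linorder})"
      assume Y: "Y \<in> so_alg"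
      have "Suc (N + N - 1) = N + N" using card unfolding N_def by simp
      then have "(ad ^^ Suc (N + N - 1)) Y = (ad ^^ N) ((ad ^^ N) Y)" by (simp add: funpow_add)
      also have "\<dots> = 0" using adNt[OF adNin[OF Y]] .
      finally show "(ad ^^ Suc (N + N - 1)) Y = 0" .
    qed
    have skew: "inner (ad u) v = - inner u (ad v)" for u v
      unfolding ad_def using comm_skew_inner Xso by (auto simp: so_alg_def)
    have "\<forall>Y\<in>so_alg. ad Y = 0" using skew_nil[OF skew nil2] .
    then show "X = 0" using central_zero[OF card Xso] unfolding ad_def by blast
  qed
  have brz: "br X Y = 0" if "X \<in> so_alg" "Y \<in> so_alg" for X Y
    using br_zero[OF lt c cb t0 that] .
  obtain A B :: "real^('n::{finite,linorder})^('n::{finite,linorder})" where AB: "A \<in> slt_alg" "B \<in> slt_alg" "commutator A B \<noteq> 0"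
    using slt_not_abelian[OF card] by blast
  obtain X Y where XY: "X \<in> so_alg" "Y \<in> so_alg" "A = f X" "B = f Y"
    using AB(1,2) fonto by (metis imageE)
  have "commutator A B = f (br X Y)" using fbr[OF XY(1,2)] XY by simp
  also have "\<dots> = 0" using brz[OF XY(1,2)] f0 by simp
  finally show False using AB(3) by simp
qed

end
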